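(* Let $\mathcal{S}$ be a set of LU-theories in a common predicate language $\Sigma$, any two of which are language similar. Then the relation $\sqsubseteq^L$ is a partial order on $\mathcal{S}$.
   Context: Theories are complete theories in predicate (relational) languages. A predicate symbol $R$ is non-empty for $T$ if $T\vdash\exists\bar x R(\bar x)$. A theory $T$ in a predicate language $\Sigma$ is language uniform (an LU-theory) if for each arity $n$, every permutation of the set of $n$-ary symbols that are non-empty for $T$ preserves $T$ (i.e., replacing each such symbol by its image maps $T$ onto $T$). Theories $T_0,T_1$ in languages $\Sigma_0,\Sigma_1$ are language similar if $T_0$ can be obtained from $T_1$ by a bijective (arity-preserving) replacement of the symbols of $\Sigma_1$ by the symbols of $\Sigma_0$. For language similar theories $T_1,T_2$ of the same language $\Sigma$, $T_1\sqsubseteq^L T_2$ means: for every $R\in\Sigma$, if $T_1\vdash\exists\bar x R(\bar x)$ then $T_2\vdash\exists\bar x R(\bar x)$. *)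

theory Defs
  imports Main
begin

datatype 'r fm =
    Eq nat nat
  | Rel 'r "nat list"
  | Neg "'r fm"
  | Conj "'r fm" "'r fm"
  | Ex nat "'r fm"

fun wf :: "'r set \<Rightarrow> ('r \<Rightarrow> nat) \<Rightarrow> 'r fm \<Rightarrow> bool" where
  "wf Sig ar (Eq x y) = True"
| "wf Sig ar (Rel R xs) = (R \<in> Sig \<and> length xs = ar R)"
| "wf Sig ar (Neg p) = wf Sig ar p"
| "wf Sig ar (Conj p q) = (wf Sig ar p \<and> wf Sig ar q)"
| "wf Sig ar (Ex x p) = wf Sig ar p"

fun fv :: "'r fm \<Rightarrow> nat set" where
  "fv (Eq x y) = {x, y}"
| "fv (Rel R xs) = set xs"
| "fv (Neg p) = fv p"
| "fv (Conj p q) = fv p \<union> fv q"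
| "fv (Ex x p) = fv p - {x}"

definition sentence :: "'r fm \<Rightarrow> bool" where
  "sentence p \<longleftrightarrow> fv p = {}"

fun sat :: "'d set \<Rightarrow> ('r \<Rightarrow> 'd list \<Rightarrow> bool) \<Rightarrow> (nat \<Rightarrow> 'd) \<Rightarrow> 'r fm \<Rightarrow> bool" where
  "sat D I e (Eq x y) = (e x = e y)"
| "sat D I e (Rel R xs) = I R (map e xs)"
| "sat D I e (Neg p) = (\<not> sat D I e p)"
| "sat D I e (Conj p q) = (sat D I e p \<and> sat D I e q)"
| "sat D I e (Ex x p) = (\<exists>a\<in>D. sat D I (e(x := a)) p)"

definition Th :: "'r set \<Rightarrow> ('r \<Rightarrow> nat) \<Rightarrow> 'd set \<Rightarrow> ('r \<Rightarrow> 'd list \<Rightarrow> bool) \<Rightarrow> 'r fm set" where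
  "Th Sig ar D I = {p. wf Sig ar p \<and> sentence p \<and> (\<forall>e. range e \<subseteq> D \<longrightarrow> sat D I e p)}"

definition complete_theory :: "'d itself \<Rightarrow> 'r set \<Rightarrow> ('r \<Rightarrow> nat) \<Rightarrow> 'r fm set \<Rightarrow> bool" where
  "complete_theory _ Sig ar T \<longleftrightarrow>
     (\<exists>(D::'d set) I. D \<noteq> {} \<and> T = Th Sig ar D I)"

text \<open>The sentence \<exists>x1...xn R(x1,...,xn).\<close>
definition exR :: "('r \<Rightarrow> nat) \<Rightarrow> 'r \<Rightarrow> 'r fm" where
  "exR ar R = foldr Ex [0..<ar R] (Rel R [0..<ar R])"

text \<open>R is non-empty for T. Since T is a complete (deductively closed) theory,
  T proves a sentence iff the sentence belongs to T.\<close>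
definition nonempty_sym :: "('r \<Rightarrow> nat) \<Rightarrow> 'r fm set \<Rightarrow> 'r \<Rightarrow> bool" where
  "nonempty_sym ar T R \<longleftrightarrow> exR ar R \<in> T"

definition LU :: "'r set \<Rightarrow> ('r \<Rightarrow> nat) \<Rightarrow> 'r fm set \<Rightarrow> bool" where
  "LU Sig ar T \<longleftrightarrow>
     (\<forall>n (\<pi>::'r \<Rightarrow> 'r).
        let E = {R \<in> Sig. ar R = n \<and> nonempty_sym ar T R} in
        bij_betw \<pi> E E \<and> (\<forall>x. x \<notin> E \<longrightarrow> \<pi> x = x) \<longrightarrow> map_fm \<pi> ` T = T)"

definition lang_similar :: "'r set \<Rightarrow> ('r \<Rightarrow> nat) \<Rightarrow> 'r fm set \<Rightarrow> 'r fm set \<Rightarrow> bool" where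
  "lang_similar Sig ar T0 T1 \<longleftrightarrow>
     (\<exists>\<sigma>. bij_betw \<sigma> Sig Sig \<and> (\<forall>R\<in>Sig. ar (\<sigma> R) = ar R) \<and> T0 = map_fm \<sigma> ` T1)"

definition leL :: "'r set \<Rightarrow> ('r \<Rightarrow> nat) \<Rightarrow> 'r fm set \<Rightarrow> 'r fm set \<Rightarrow> bool" where
  "leL Sig ar T1 T2 \<longleftrightarrow> (\<forall>R\<in>Sig. nonempty_sym ar T1 R \<longrightarrow> nonempty_sym ar T2 R)"

definition leL_rel :: "'r set \<Rightarrow> ('r \<Rightarrow> nat) \<Rightarrow> 'r fm set set \<Rightarrow> ('r fm set \<times> 'r fm set) set" where
  "leL_rel Sig ar S = {(T1, T2). T1 \<in> S \<and> T2 \<in> S \<and> leL Sig ar T1 T2}"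

end

theory Submission
  imports Defs
begin

lemma sat_map: "sat D I e (map_fm \<sigma> p) = sat D (\<lambda>R. I (\<sigma> R)) e p"
  by (induction p arbitrary: e) auto

lemma fv_map: "fv (map_fm \<sigma> p) = fv p"
  by (induction p) auto

lemma wf_map: "wf Sig ar p \<Longrightarrow> (\<forall>R\<in>Sig. \<sigma> R \<in> Sig \<and> ar (\<sigma> R) = ar R) \<Longrightarrow> wf Sig ar (map_fm \<sigma> p)"
  by (induction p) auto

lemma wf_set: "wf Sig ar p \<Longrightarrow> set_fm p \<subseteq> Sig"
  by (induction p) auto

lemma sat_fv: "\<forall>x\<in>fv p. e x = e' x \<Longrightarrow> sat D I e p = sat D I e' p"
proof (induction p arbitrary: e e')
  case (Rel R xs)
  then have "map e xs = map e' xs" by (simp add: map_eq_conv)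
  then show ?case by (metis sat.simps(2))
next
  case (Ex x p)
  have "\<And>a. sat D I (e(x:=a)) p = sat D I (e'(x:=a)) p"
    by (rule Ex.IH) (use Ex.prems in auto)
  then show ?case by simp
next
  case (Conj p1 p2)
  have "sat D I e p1 = sat D I e' p1" by (rule Conj.IH(1)) (use Conj.prems in auto)
  moreover have "sat D I e p2 = sat D I e' p2" by (rule Conj.IH(2)) (use Conj.prems in auto)
  ultimately show ?case by simp
qed auto

lemma sat_cong_I:
  "wf Sig ar p \<Longrightarrow> range e \<subseteq> D \<Longrightarrow>
   (\<forall>R\<in>set_fm p. \<forall>ds. set ds \<subseteq> D \<longrightarrow> length ds = ar R \<longrightarrow> I R ds = J R ds) \<Longrightarrow>
   sat D I e p = sat D J e p"
proof (induction p arbitrary: e)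
  case (Rel R xs)
  have "set (map e xs) \<subseteq> D" using Rel.prems(2) by auto
  then show ?case using Rel by auto
next
  case (Ex x p)
  have "\<And>a. a \<in> D \<Longrightarrow> range (e(x:=a)) \<subseteq> D" using Ex.prems(2) by auto
  then show ?case using Ex by auto
qed auto

lemma fv_foldr: "fv (foldr Ex vs \<phi>) = fv \<phi> - set vs"
  by (induction vs) auto

lemma wf_foldr: "wf Sig ar (foldr Ex vs \<phi>) = wf Sig ar \<phi>"
  by (induction vs) auto

lemma sat_foldr:
  "sat D I e' \<phi> \<Longrightarrow> (\<forall>x. x \<notin> set vs \<longrightarrow> e' x = e x) \<Longrightarrow> (\<forall>x\<in>set vs. e' x \<in> D)
   \<Longrightarrow> sat D I e (foldr Ex vs \<phi>)"
proof (induction vs arbitrary: e)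
  case Nil
  then have "e' = e" by auto
  then show ?case using Nil by simp
next
  case (Cons v vs)
  have "sat D I (e(v := e' v)) (foldr Ex vs \<phi>)"
    by (rule Cons.IH) (use Cons.prems in auto)
  then show ?case using Cons.prems by auto
qed

lemma map_foldr_inv:
  "map_fm \<sigma> p = foldr Ex vs (Rel S ys) \<Longrightarrow> \<exists>R'. p = foldr Ex vs (Rel R' ys) \<and> \<sigma> R' = S"
proof (induction vs arbitrary: p)
  case Nil
  then show ?case by (cases p) auto
next
  case (Cons v vs)
  then show ?case by (cases p) auto
qed

lemma map_exR: "ar (\<sigma> R) = ar R \<Longrightarrow> map_fm \<sigma> (exR ar R) = exR ar (\<sigma> R)"
proof -
  have "map_fm \<sigma> (foldr Ex vs \<phi>) = foldr Ex vs (map_fm \<sigma> \<phi>)" for vs \<phi>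
    by (induction vs) auto
  then show "ar (\<sigma> R) = ar R \<Longrightarrow> ?thesis" unfolding exR_def by simp
qed

lemma Th_exR_empty:
  assumes "R \<in> Sig" "exR ar R \<notin> Th Sig ar D I" "set ds \<subseteq> D" "length ds = ar R"
  shows "\<not> I R ds"
proof
  assume IR: "I R ds"
  have "exR ar R \<in> Th Sig ar D I"
    unfolding Th_def sentence_def
  proof (intro CollectI conjI allI impI)
    show "wf Sig ar (exR ar R)" using assms by (simp add: exR_def wf_foldr)
    show "fv (exR ar R) = {}" by (auto simp: exR_def fv_foldr)
    fix e :: "nat \<Rightarrow> _" assume "range e \<subseteq> D"
    define e' where "e' = (\<lambda>i. if i < ar R then ds ! i else e i)"
    have m: "map e' [0..<ar R] = ds" using assms(4)
      by (simp add: e'_def list_eq_iff_nth_eq)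
    show "sat D I e (exR ar R)" unfolding exR_def
      by (rule sat_foldr[where e'=e']) (use IR m assms(3,4) in \<open>auto simp: e'_def\<close>)
  qed
  then show False using assms(2) by simp
qed

lemma Th_complete_eq:
  assumes "D1 \<noteq> {}" "D2 \<noteq> {}" "Th Sig ar D1 I1 \<subseteq> Th Sig ar D2 I2"
  shows "Th Sig ar D1 I1 = Th Sig ar D2 I2"
proof (rule ccontr)
  assume "Th Sig ar D1 I1 \<noteq> Th Sig ar D2 I2"
  then obtain p where p: "p \<in> Th Sig ar D2 I2" "p \<notin> Th Sig ar D1 I1" using assms(3) by blast
  from p(1) have wp: "wf Sig ar p" "sentence p" by (auto simp: Th_def)
  from p(2) wp obtain e where e: "range e \<subseteq> D1" "\<not> sat D1 I1 e p" by (auto simp: Th_def)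
  have "\<And>e'. \<not> sat D1 I1 e' p" using e(2) sat_fv[of p e] wp(2) by (auto simp: sentence_def)
  then have "Neg p \<in> Th Sig ar D1 I1" using wp by (auto simp: Th_def sentence_def)
  then have np: "Neg p \<in> Th Sig ar D2 I2" using assms(3) by blast
  obtain d where "d \<in> D2" using assms(2) by blast
  then have "range (\<lambda>_. d) \<subseteq> D2" by auto
  then show False using np p(1) by (auto simp: Th_def)
qed

lemma antisym_main:
  fixes T1 T2 :: "'r fm set"
  assumes c1: "complete_theory TYPE('d) Sig ar T1"
      and c2: "complete_theory TYPE('d) Sig ar T2"
      and lu: "LU Sig ar T2"
      and ls: "lang_similar Sig ar T1 T2"
      and l12: "leL Sig ar T1 T2" and l21: "leL Sig ar T2 T1"
  shows "T1 = T2"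
proof -
  obtain D1 :: "'d set" and I1 where D1: "D1 \<noteq> {}" "T1 = Th Sig ar D1 I1"
    using c1 by (auto simp: complete_theory_def)
  obtain D :: "'d set" and I where D: "D \<noteq> {}" "T2 = Th Sig ar D I"
    using c2 by (auto simp: complete_theory_def)
  obtain \<sigma> where \<sigma>: "bij_betw \<sigma> Sig Sig" "\<forall>R\<in>Sig. ar (\<sigma> R) = ar R" "T1 = map_fm \<sigma> ` T2"
    using ls by (auto simp: lang_similar_def)
  have \<sigma>S: "\<forall>R\<in>Sig. \<sigma> R \<in> Sig \<and> ar (\<sigma> R) = ar R" using \<sigma> by (auto simp: bij_betw_def)
  have wfT2: "\<And>p. p \<in> T2 \<Longrightarrow> wf Sig ar p \<and> sentence p" using D by (auto simp: Th_def)
  define ne where "ne = (\<lambda>R. nonempty_sym ar T2 R)"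
  have ne12: "\<And>R. R \<in> Sig \<Longrightarrow> nonempty_sym ar T1 R = ne R"
    using l12 l21 by (auto simp: leL_def ne_def)
  have neT1: "\<And>R. R \<in> Sig \<Longrightarrow> nonempty_sym ar T1 (\<sigma> R) = ne R"
  proof -
    fix R assume R: "R \<in> Sig"
    show "nonempty_sym ar T1 (\<sigma> R) = ne R"
    proof
      assume "nonempty_sym ar T1 (\<sigma> R)"
      then obtain p where p: "p \<in> T2" "map_fm \<sigma> p = exR ar (\<sigma> R)"
        using \<sigma>(3) by (auto simp: nonempty_sym_def)
      then obtain R' where R': "p = foldr Ex [0..<ar (\<sigma> R)] (Rel R' [0..<ar (\<sigma> R)])" "\<sigma> R' = \<sigma> R"
        using map_foldr_inv[of \<sigma> p] unfolding exR_def by blast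
      have "wf Sig ar p" using wfT2 p(1) by blast
      then have "R' \<in> Sig" using R' by (simp add: wf_foldr)
      then have "R' = R" using R R'(2) \<sigma>(1) by (auto simp: bij_betw_def inj_on_def)
      then have "p = exR ar R" using R' \<sigma>S R by (simp add: exR_def)
      then show "ne R" using p(1) by (simp add: ne_def nonempty_sym_def)
    next
      assume "ne R"
      then have "map_fm \<sigma> (exR ar R) \<in> T1" using \<sigma>(3) by (auto simp: ne_def nonempty_sym_def)
      then show "nonempty_sym ar T1 (\<sigma> R)" using map_exR[of ar \<sigma> R] \<sigma>S R
        by (simp add: nonempty_sym_def)
    qed
  qed
  have neS: "\<And>R. R \<in> Sig \<Longrightarrow> ne (\<sigma> R) = ne R"
    using neT1 ne12 \<sigma>S by metis
  define E where "E = (\<lambda>n. {R \<in> Sig. ar R = n \<and> ne R})"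
  have bijE: "bij_betw \<sigma> (E n) (E n)" for n
  proof -
    have inj: "inj_on \<sigma> (E n)" using \<sigma>(1) by (auto simp: bij_betw_def E_def inj_on_def)
    have "\<sigma> ` E n = E n"
    proof
      show "\<sigma> ` E n \<subseteq> E n" using \<sigma>S neS by (auto simp: E_def)
      show "E n \<subseteq> \<sigma> ` E n"
      proof
        fix R' assume "R' \<in> E n"
        then have R': "R' \<in> Sig" "ar R' = n" "ne R'" by (auto simp: E_def)
        then obtain R where R: "R \<in> Sig" "R' = \<sigma> R" using \<sigma>(1) by (auto simp: bij_betw_def)
        then have "R \<in> E n" using R' neS \<sigma>S by (auto simp: E_def)
        then show "R' \<in> \<sigma> ` E n" using R by blast
      qed
    qed
    then show ?thesis using inj by (simp add: bij_betw_def)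
  qed
  define pi where "pi = (\<lambda>A R. if R \<in> Sig \<and> ne R \<and> ar R \<in> A then \<sigma> R else R)"
  have piT: "finite A \<Longrightarrow> map_fm (pi A) ` T2 = T2" for A
  proof (induction A rule: finite_induct)
    case empty
    have "pi {} = id" by (auto simp: pi_def)
    then show ?case by (simp add: fm.map_id0[unfolded id_def])
  next
    case (insert n A)
    have comp: "pi (insert n A) = pi {n} \<circ> pi A"
      using insert(2) \<sigma>S neS by (auto simp: pi_def fun_eq_iff)
    have "bij_betw (pi {n}) (E n) (E n)"
      using bijE[of n] by (rule bij_betw_cong[THEN iffD1, rotated]) (auto simp: pi_def E_def)
    moreover have "\<forall>x. x \<notin> E n \<longrightarrow> pi {n} x = x" by (auto simp: pi_def E_def)
    ultimately have "map_fm (pi {n}) ` T2 = T2"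
      using lu unfolding LU_def Let_def E_def ne_def by blast
    moreover have "map_fm (pi (insert n A)) = map_fm (pi {n}) \<circ> map_fm (pi A)"
      by (simp add: comp fun_eq_iff fm.map_comp)
    ultimately show ?case using insert(3) by (simp only: image_comp[symmetric])
  qed
  have sub: "T1 \<subseteq> T2"
  proof
    fix q assume "q \<in> T1"
    then obtain p where p: "p \<in> T2" "q = map_fm \<sigma> p" using \<sigma>(3) by blast
    have wp: "wf Sig ar p" "sentence p" using wfT2 p(1) by auto
    define A where "A = ar ` set_fm p"
    have fA: "finite A" by (simp add: A_def fm.set_finite)
    have pin: "map_fm (pi A) p \<in> T2" using piT[OF fA] p(1) by blast
    have "sat D I e (map_fm \<sigma> p)" if e: "range e \<subseteq> D" for e
    proof -
      have agree: "\<forall>R\<in>set_fm p. \<forall>ds. set ds \<subseteq> D \<longrightarrow> length ds = ar R \<longrightarrow>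
                     I (\<sigma> R) ds = I (pi A R) ds"
      proof (intro ballI allI impI)
        fix R ds assume R: "R \<in> set_fm p" and ds: "set ds \<subseteq> D" "length ds = ar R"
        have RS: "R \<in> Sig" using wf_set[OF wp(1)] R by blast
        show "I (\<sigma> R) ds = I (pi A R) ds"
        proof (cases "ne R")
          case True then show ?thesis using RS R by (auto simp: pi_def A_def)
        next
          case False
          have "\<not> I R ds" using Th_exR_empty[of R Sig ar D I ds] RS ds False D(2) by (auto simp: ne_def nonempty_sym_def)
          moreover have "\<not> I (\<sigma> R) ds"
            using Th_exR_empty[of "\<sigma> R" Sig ar D I ds] False neS[OF RS] \<sigma>S RS ds D(2)
            by (auto simp: ne_def nonempty_sym_def)
          ultimately show ?thesis using False by (simp add: pi_def)
        qed
      qed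
      have "sat D I e (map_fm (pi A) p)" using pin e D(2) by (auto simp: Th_def)
      then show ?thesis
        using sat_cong_I[OF wp(1) e agree] by (simp add: sat_map)
    qed
    moreover have "wf Sig ar (map_fm \<sigma> p)" using wf_map[OF wp(1) \<sigma>S] .
    moreover have "sentence (map_fm \<sigma> p)" using wp(2) by (simp add: sentence_def fv_map)
    ultimately show "q \<in> T2" using p(2) D(2) by (auto simp: Th_def)
  qed
  show ?thesis using Th_complete_eq[OF D1(1) D(1)] sub D1(2) D(2) by simp
qed

theorem proposition4p4:
  fixes Sig :: "'r set" and ar :: "'r \<Rightarrow> nat" and S :: "'r fm set set"
  assumes "\<forall>T\<in>S. complete_theory TYPE('d) Sig ar T"
      and "\<forall>T\<in>S. LU Sig ar T"
      and "\<forall>T1\<in>S. \<forall>T2\<in>S. lang_similar Sig ar T1 T2"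
  shows "partial_order_on S (leL_rel Sig ar S)"
proof -
  have anti: "antisym (leL_rel Sig ar S)"
  proof (rule antisymI)
    fix a b assume "(a, b) \<in> leL_rel Sig ar S" "(b, a) \<in> leL_rel Sig ar S"
    then show "a = b" using antisym_main[of Sig ar a b] assms by (auto simp: leL_rel_def)
  qed
  show ?thesis unfolding partial_order_on_def preorder_on_def
    using anti by (auto simp: refl_on_def trans_def leL_rel_def leL_def)
qed

end
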